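(* Let $\mathbf{K}\in\mathbb{R}^{p\times d}$ be nonzero, $b\in\mathrm{range}(\mathbf{K})$, $F:\mathbb{R}^d\to\mathbb{R}$ be $L$-smooth and $\mu$-strongly convex with $\kappa=L/\mu$, $\mathbf{W}=\mathbf{K}^T\mathbf{K}$, and let $(x^\star,y^\star)$ be the optimal primal–dual pair described in the context. Consider $\lambda_1 \geq \lambda_{\max}(\mathbf{W})$ and $\lambda_2$ such that $0 < \lambda_2 \leq \lambda_{\min}^+(\mathbf{W})$, and denote $\chi \coloneqq \lambda_1/\lambda_2$. Set $\tau \coloneqq \min \left\{1,\frac{1}{2}\sqrt{\frac{\chi}{\kappa} }\right\}$, $\eta \coloneqq \frac{1} {4\tau L}$, $\theta \coloneqq \frac{1}{\eta\lambda_1}$, and $\alpha \coloneqq \mu$, and run Algorithm B (described in the context). Then for all $k\ge0$, $$\frac{1}{\eta}\|x^k - x^{\star}\|^2 + \frac{\eta\alpha}{\theta(1+\eta\alpha)}\|y^k - y^{\star}\|^2 + \frac{2(1-\tau)}{\tau}\mathrm{D}_F(x_f^k, x^{\star}) \leq \left(1 + \frac{1}{4}\min\left\{\frac{1}{\sqrt{\kappa\chi}},\frac{1}{\chi}\right\}\right)^{-k} C,$$ where $C \coloneqq \frac{1}{\eta}\|x^0 - x^{\star}\|^2 + \frac{1}{\theta}\|y^0 - y^{\star}\|^2 + \frac{2(1-\tau)}{\tau}\mathrm{D}_F(x_f^0, x^{\star})$.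
   Context: $F$ is $L$-smooth ($\nabla F$ is $L$-Lipschitz) and $\mu$-strongly convex ($F-\frac{\mu}{2}\|\cdot\|^2$ convex), $0<\mu\le L$. $\mathrm{D}_F(x,x') \coloneqq F(x) - F(x') -\langle\nabla F(x'),x-x'\rangle$. $\lambda_{\max}(\mathbf{W})$ and $\lambda_{\min}^+(\mathbf{W})$ are the largest and smallest positive eigenvalues of $\mathbf{W}$. $x^\star$ is the unique minimizer of $F$ on $\{x:\mathbf{K}x=b\}$, and $y^\star$ is the unique vector in $\mathrm{range}(\mathbf{K})$ with $\nabla F(x^\star)+\mathbf{K}^Ty^\star=0$. Algorithm B (parameters $x^0\in\mathbb{R}^d$, $y^0=0\in\mathbb{R}^p$, $\eta,\theta,\alpha>0$, $\tau$): set $x_f^0=x^0$. For $k=0,1,\ldots$: $x_g^k = \tau x^k + (1-\tau)x_f^k$; $x^{k+\frac12} = (1+\eta\alpha)^{-1}\big(x^k - \eta(\nabla F(x_g^k) - \alpha x_g^k + \mathbf{K}^T y^k)\big)$; $y^{k+1} = y^k + \theta(\mathbf{K}x^{k+\frac12} - b)$; $x^{k+1} = (1+\eta\alpha)^{-1}\big(x^k - \eta(\nabla F(x_g^k) - \alpha x_g^k + \mathbf{K}^T y^{k+1})\big)$; $x_f^{k+1} = x_g^k + \frac{2\tau}{2-\tau}(x^{k+1}-x^k)$. *)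

theory Defs
  imports "HOL-Analysis.Analysis"
begin

text \<open>Bregman divergence of F (with gradient gradF).\<close>
definition bregman :: "(real^'d \<Rightarrow> real) \<Rightarrow> (real^'d \<Rightarrow> real^'d) \<Rightarrow> real^'d \<Rightarrow> real^'d \<Rightarrow> real" where
  "bregman F gradF x x' = F x - F x' - gradF x' \<bullet> (x - x')"

text \<open>Eigenvalues of a real square matrix.\<close>
definition eigenvalues :: "real^'n^'n \<Rightarrow> real set" where
  "eigenvalues W = {l. \<exists>v. v \<noteq> 0 \<and> W *v v = l *\<^sub>R v}"

text \<open>One iteration of Algorithm B; state is (x^k, y^k, x_f^k).\<close>
definition algB_step ::
  "(real^'d \<Rightarrow> real^'d) \<Rightarrow> real^'d^'p \<Rightarrow> real^'p \<Rightarrow> real \<Rightarrow> real \<Rightarrow> real \<Rightarrow> real \<Rightarrow>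
   ((real^'d) \<times> (real^'p) \<times> (real^'d)) \<Rightarrow> ((real^'d) \<times> (real^'p) \<times> (real^'d))" where
  "algB_step gradF K b eta theta alpha tau s =
     (case s of (x, y, xf) \<Rightarrow>
       let xg = tau *\<^sub>R x + (1 - tau) *\<^sub>R xf;
           xh = inverse (1 + eta * alpha) *\<^sub>R (x - eta *\<^sub>R (gradF xg - alpha *\<^sub>R xg + transpose K *v y));
           y' = y + theta *\<^sub>R (K *v xh - b);
           x' = inverse (1 + eta * alpha) *\<^sub>R (x - eta *\<^sub>R (gradF xg - alpha *\<^sub>R xg + transpose K *v y'));
           xf' = xg + (2 * tau / (2 - tau)) *\<^sub>R (x' - x)
       in (x', y', xf'))"

text \<open>The k-th iterate of Algorithm B started at x^0 with y^0 = 0, x_f^0 = x^0.\<close>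
definition algB ::
  "(real^'d \<Rightarrow> real^'d) \<Rightarrow> real^'d^'p \<Rightarrow> real^'p \<Rightarrow> real \<Rightarrow> real \<Rightarrow> real \<Rightarrow> real \<Rightarrow>
   real^'d \<Rightarrow> nat \<Rightarrow> ((real^'d) \<times> (real^'p) \<times> (real^'d))" where
  "algB gradF K b eta theta alpha tau x0 k = (algB_step gradF K b eta theta alpha tau ^^ k) (x0, 0, x0)"

end

theory Submission
  imports Defs
begin

lemma line_deriv:
  fixes F :: "'a::real_inner \<Rightarrow> real"
  assumes grad: "\<And>x. (F has_derivative (\<lambda>h. gF x \<bullet> h)) (at x)"
  shows "((\<lambda>t. F (x + t *\<^sub>R d)) has_real_derivative (gF (x + t *\<^sub>R d) \<bullet> d)) (at t)"
proof -
  have l: "((\<lambda>t. x + t *\<^sub>R d) has_derivative (\<lambda>s. s *\<^sub>R d)) (at t)"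
    by (auto intro!: derivative_eq_intros)
  have "((\<lambda>t. F (x + t *\<^sub>R d)) has_derivative (\<lambda>s. gF (x + t *\<^sub>R d) \<bullet> (s *\<^sub>R d))) (at t)"
    using has_derivative_compose[OF l grad] by (simp add: o_def)
  then show ?thesis unfolding has_field_derivative_def
    by (rule has_derivative_eq_rhs) (auto simp: fun_eq_iff mult.commute)
qed

lemma strong_tangent:
  fixes F :: "'a::real_inner \<Rightarrow> real"
  assumes grad: "\<And>x. (F has_derivative (\<lambda>h. gF x \<bullet> h)) (at x)"
    and cvx: "convex_on UNIV (\<lambda>x. F x - \<mu> / 2 * norm x ^ 2)"
  shows "F y \<ge> F x + gF x \<bullet> (y - x) + \<mu> / 2 * norm (y - x) ^ 2"
proof -
  define d where "d = y - x"
  define \<phi> where "\<phi> t = F (x + t *\<^sub>R d) - \<mu> / 2 * norm x ^ 2 - (\<mu> * (x \<bullet> d)) * t - (\<mu> / 2 * norm d ^ 2) * t^2" for t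
  have phin: "\<phi> t = F (x + t *\<^sub>R d) - \<mu> / 2 * norm (x + t *\<^sub>R d) ^ 2" for t
    unfolding \<phi>_def by (simp only: power2_norm_eq_inner) (simp add: inner_simps algebra_simps power2_eq_square inner_commute)
  have cv: "convex_on UNIV \<phi>"
  proof (rule convex_onI)
    fix t a b :: real assume t: "0 < t" "t < 1"
    have e: "x + ((1 - t) *\<^sub>R a + t *\<^sub>R b) *\<^sub>R d = (1 - t) *\<^sub>R (x + a *\<^sub>R d) + t *\<^sub>R (x + b *\<^sub>R d)"
      by (simp add: algebra_simps)
    show "\<phi> ((1 - t) *\<^sub>R a + t *\<^sub>R b) \<le> (1 - t) * \<phi> a + t * \<phi> b"
      unfolding phin e using convex_onD[OF cvx, of t "x + a *\<^sub>R d" "x + b *\<^sub>R d"] t by simp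
  qed simp
  have der: "(\<phi> has_real_derivative (gF x \<bullet> d - \<mu> * (x \<bullet> d))) (at 0)"
  proof -
    have p2: "((\<lambda>t::real. t^2) has_real_derivative (2*0)) (at 0)" using DERIV_pow[of 2 0] by simp
    have "(\<phi> has_real_derivative (gF (x + 0 *\<^sub>R d) \<bullet> d - 0 - (\<mu> * (x \<bullet> d)) * 1 - (\<mu> / 2 * norm d ^ 2) * (2*0))) (at 0)"
      unfolding \<phi>_def
      by (intro DERIV_diff DERIV_const DERIV_cmult DERIV_ident p2 line_deriv[OF grad])
    then show ?thesis by simp
  qed
  have "\<phi> 1 - \<phi> 0 \<ge> (gF x \<bullet> d - \<mu> * (x \<bullet> d)) * (1 - 0)"
    by (rule convex_on_imp_above_tangent[OF cv]) (auto intro: has_field_derivative_at_within[OF der])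
  then show ?thesis unfolding \<phi>_def d_def
    by (simp only: power2_norm_eq_inner) (simp add: inner_simps algebra_simps power2_eq_square inner_commute)
qed

lemma descent:
  fixes F :: "'a::real_inner \<Rightarrow> real"
  assumes grad: "\<And>x. (F has_derivative (\<lambda>h. gF x \<bullet> h)) (at x)"
    and smooth: "\<And>x y. norm (gF x - gF y) \<le> L * norm (x - y)"
  shows "F y \<le> F x + gF x \<bullet> (y - x) + L / 2 * norm (y - x) ^ 2"
proof -
  define d where "d = y - x"
  define h where "h t = F (x + t *\<^sub>R d) - (gF x \<bullet> d) * t - (L / 2 * norm d ^ 2) * t^2" for t
  have der: "(h has_real_derivative (gF (x + t *\<^sub>R d) \<bullet> d - gF x \<bullet> d - L * t * norm d ^ 2)) (at t)" for t
  proof -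
    have p2: "((\<lambda>t::real. t^2) has_real_derivative (2*t)) (at t)" using DERIV_pow[of 2 t] by simp
    have "(h has_real_derivative (gF (x + t *\<^sub>R d) \<bullet> d - (gF x \<bullet> d) * 1 - (L / 2 * norm d ^ 2) * (2 * t))) (at t)"
      unfolding h_def by (intro DERIV_diff DERIV_cmult DERIV_ident p2 line_deriv[OF grad])
    then show ?thesis by (rule DERIV_cong) (simp add: power2_eq_square algebra_simps)
  qed
  have nonpos: "gF (x + t *\<^sub>R d) \<bullet> d - gF x \<bullet> d - L * t * norm d ^ 2 \<le> 0" if "0 \<le> t" for t
  proof -
    have "gF (x + t *\<^sub>R d) \<bullet> d - gF x \<bullet> d = (gF (x + t *\<^sub>R d) - gF x) \<bullet> d" by (simp add: inner_simps)
    also have "\<dots> \<le> norm (gF (x + t *\<^sub>R d) - gF x) * norm d" by (rule norm_cauchy_schwarz)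
    also have "\<dots> \<le> L * norm (t *\<^sub>R d) * norm d"
      using smooth[of "x + t *\<^sub>R d" x] by (simp add: mult_right_mono)
    also have "\<dots> = L * t * norm d ^ 2" using that by (simp add: power2_eq_square)
    finally show ?thesis by simp
  qed
  have "h 1 \<le> h 0"
  proof (rule DERIV_nonpos_imp_nonincreasing[of 0 1 h])
    fix t :: real assume "0 \<le> t" "t \<le> 1"
    then show "\<exists>y. DERIV h t :> y \<and> y \<le> 0" using der[of t] nonpos[of t] by blast
  qed simp
  then show ?thesis unfolding h_def d_def by simp
qed

lemma cocoercive:
  fixes F :: "'a::real_inner \<Rightarrow> real"
  assumes grad: "\<And>x. (F has_derivative (\<lambda>h. gF x \<bullet> h)) (at x)"
    and smooth: "\<And>x y. norm (gF x - gF y) \<le> L * norm (x - y)"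
    and Lpos: "0 < L"
    and tang: "\<And>x y. F y \<ge> F x + gF x \<bullet> (y - x)"
  shows "F y - F x - gF x \<bullet> (y - x) \<ge> norm (gF y - gF x) ^ 2 / (2 * L)"
proof -
  define dd where "dd = gF y - gF x"
  define w where "w = y - (1 / L) *\<^sub>R dd"
  have t1: "F w \<ge> F x + gF x \<bullet> (w - x)" by (rule tang)
  have t2: "F w \<le> F y + gF y \<bullet> (w - y) + L / 2 * norm (w - y) ^ 2" by (rule descent[OF grad smooth])
  have e1: "gF x \<bullet> (w - x) = gF x \<bullet> (y - x) + gF x \<bullet> (w - y)" by (simp add: inner_simps)
  have e2: "gF y \<bullet> (w - y) - gF x \<bullet> (w - y) = - (1/L) * norm dd ^ 2"
    unfolding w_def dd_def by (simp add: inner_simps power2_norm_eq_inner algebra_simps)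
  have e3: "L / 2 * norm (w - y) ^ 2 = (1/(2*L)) * norm dd ^ 2"
    unfolding w_def using Lpos by (simp add: power2_eq_square field_simps)
  have "- (1/L) * norm dd ^ 2 + (1/(2*L)) * norm dd ^ 2 = - (norm dd ^ 2 / (2 * L))"
    using Lpos by (simp add: field_simps)
  then show ?thesis using t1 t2 e1 e2 e3 unfolding dd_def by linarith
qed

lemma rayleigh_eig:
  fixes A :: "'a::real_inner \<Rightarrow> 'a"
  assumes lin: "linear A" and sym: "\<And>z w. A z \<bullet> w = z \<bullet> A w"
    and S: "subspace S" "v \<in> S" "\<And>z. z \<in> S \<Longrightarrow> A z \<in> S"
    and low: "\<And>z. z \<in> S \<Longrightarrow> m * norm z ^ 2 \<le> A z \<bullet> z"
    and att: "A v \<bullet> v = m * norm v ^ 2"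
  shows "A v = m *\<^sub>R v"
proof -
  define w where "w = A v - m *\<^sub>R v"
  have wS: "w \<in> S" unfolding w_def using S by (intro subspace_diff subspace_scale) auto
  define c where "c = A w \<bullet> w - m * (w \<bullet> w)"
  have key: "2 * t * (w \<bullet> w) \<le> t^2 * c" if "t > 0" for t
  proof -
    have zS: "v - t *\<^sub>R w \<in> S" using S wS by (intro subspace_diff subspace_scale) auto
    have Az: "A (v - t *\<^sub>R w) = A v - t *\<^sub>R A w" using lin by (simp add: linear_diff linear_scale)
    have "m * norm (v - t *\<^sub>R w) ^ 2 \<le> A (v - t *\<^sub>R w) \<bullet> (v - t *\<^sub>R w)" by (rule low[OF zS])
    also have "\<dots> = A v \<bullet> v - 2 * t * (A v \<bullet> w) + t^2 * (A w \<bullet> w)"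
      unfolding Az using sym[of w v] by (simp add: inner_simps power2_eq_square algebra_simps inner_commute)
    finally have i1: "m * norm (v - t *\<^sub>R w) ^ 2 \<le> A v \<bullet> v - 2 * t * (A v \<bullet> w) + t^2 * (A w \<bullet> w)" .
    have n1: "norm (v - t *\<^sub>R w) ^ 2 = v \<bullet> v - 2 * t * (v \<bullet> w) + t^2 * (w \<bullet> w)"
      by (simp only: power2_norm_eq_inner) (simp add: inner_simps power2_eq_square algebra_simps inner_commute)
    have avw: "A v \<bullet> w = w \<bullet> w + m * (v \<bullet> w)" unfolding w_def by (simp add: inner_simps algebra_simps)
    have avv: "A v \<bullet> v = m * (v \<bullet> v)" using att by (simp add: power2_norm_eq_inner)
    from i1 n1 avw avv show ?thesis unfolding c_def by (simp add: algebra_simps)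
  qed
  have "w \<bullet> w = 0"
  proof (rule ccontr)
    assume ne: "w \<bullet> w \<noteq> 0"
    then have pos: "w \<bullet> w > 0" by (simp add: order_less_le)
    define t where "t = (w \<bullet> w) / (\<bar>c\<bar> + 1)"
    have tpos: "t > 0" unfolding t_def using pos by simp
    have "2 * t * (w \<bullet> w) \<le> t^2 * c" by (rule key[OF tpos])
    then have "2 * (w \<bullet> w) \<le> t * c" using tpos by (simp add: power2_eq_square)
    moreover have "t * c \<le> t * \<bar>c\<bar>" using tpos by (simp add: mult_left_mono)
    moreover have "t * \<bar>c\<bar> < w \<bullet> w" unfolding t_def using pos
      by (simp add: field_simps)
    ultimately show False using pos by linarith
  qed
  then show ?thesis unfolding w_def by simp
qed

lemma adj: "(transpose K *v y) \<bullet> x = y \<bullet> ((K::real^'d^'p) *v x)"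
  by (simp add: dot_lmul_matrix)

lemma W_apply: "(transpose K ** K) *v x = transpose K *v ((K::real^'d^'p) *v x)"
  by (simp add: matrix_vector_mul_assoc)

lemma upper_spec:
  fixes K :: "real^'d^'p"
  assumes lam1_bd: "\<forall>l \<in> eigenvalues (transpose K ** K). l \<le> lam1"
  shows "\<exists>m. m \<in> eigenvalues (transpose K ** K) \<and> (\<forall>x. norm (K *v x) ^ 2 \<le> m * norm x ^ 2)
             \<and> (K \<noteq> 0 \<longrightarrow> m > 0)"
proof -
  obtain u :: "real^'d" where u: "norm u = 1" using vector_choose_size[of 1] by auto
  have "\<exists>v\<in>sphere 0 1. \<forall>z\<in>sphere 0 1. norm (K *v z) ^ 2 \<le> norm (K *v v) ^ 2"
    by (rule continuous_attains_sup) (use u in \<open>auto intro!: continuous_intros simp: matrix_vector_mult_linear_continuous_on\<close>)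
  then obtain v :: "real^'d" where v: "norm v = 1" and vmax: "\<And>z. norm z = 1 \<Longrightarrow> norm (K *v z) ^ 2 \<le> norm (K *v v) ^ 2"
    by auto
  define m where "m = norm (K *v v) ^ 2"
  have bnd: "norm (K *v z) ^ 2 \<le> m * norm z ^ 2" for z
  proof (cases "z = 0")
    case True then show ?thesis by simp
  next
    case False
    then have nz: "norm z > 0" by simp
    have "norm (K *v ((1 / norm z) *\<^sub>R z)) ^ 2 \<le> m" unfolding m_def using False by (intro vmax) simp
    also have "K *v ((1 / norm z) *\<^sub>R z) = (1 / norm z) *\<^sub>R (K *v z)" by (simp add: matrix_vector_mult_scaleR)
    finally have "(norm (K *v z) / norm z) ^ 2 \<le> m" by (simp add: divide_inverse mult.commute)
    then show ?thesis using nz by (simp add: power_divide field_simps)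
  qed
  define A where "A x = - ((transpose K ** K) *v x)" for x :: "real^'d"
  have linA: "linear A" unfolding A_def by (intro linear_compose_neg) simp
  have symA: "A z \<bullet> w = z \<bullet> A w" for z w
    unfolding A_def W_apply inner_minus_left inner_minus_right by (metis adj inner_commute)
  have Azz: "A z \<bullet> z = -(norm (K *v z) ^ 2)" for z
    unfolding A_def W_apply by (simp add: dot_lmul_matrix power2_norm_eq_inner)
  have "A v = (- m) *\<^sub>R v"
    by (rule rayleigh_eig[OF linA symA subspace_UNIV]) (use bnd[unfolded m_def] in \<open>auto simp: Azz v m_def\<close>)
  then have ev: "(transpose K ** K) *v v = m *\<^sub>R v" unfolding A_def by (metis neg_equal_iff_equal scaleR_minus_left)
  have mev: "m \<in> eigenvalues (transpose K ** K)"
    unfolding eigenvalues_def using ev v by (auto intro!: exI[of _ v])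
  have "m > 0" if "K \<noteq> 0"
  proof (rule ccontr)
    assume "\<not> m > 0"
    then have "m \<le> 0" by simp
    then have "K *v z = 0" for z using bnd[of z]
      by (smt (verit) mult_nonpos_nonneg zero_le_power2 zero_less_power2 norm_eq_zero)
    then have "K = 0" by (simp add: matrix_eq)
    with that show False by simp
  qed
  with mev bnd show ?thesis by blast
qed

lemma lower_spec:
  fixes K :: "real^'d^'p"
  assumes Knz: "K \<noteq> 0"
  shows "\<exists>m. m \<in> eigenvalues (transpose K ** K) \<and> m > 0 \<and>
             (\<forall>y \<in> range (\<lambda>x. K *v x). m * norm y ^ 2 \<le> norm (transpose K *v y) ^ 2)"
proof -
  define S where "S = range (\<lambda>x. K *v x)"
  have subS: "subspace S" unfolding S_def by (intro real_vector.linear_subspace_image subspace_UNIV) simp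
  have clS: "closed S" by (rule closed_subspace[OF subS])
  obtain x1 where x1: "K *v x1 \<noteq> 0" using Knz by (metis matrix_eq matrix_vector_mult_0)
  define u where "u = (1 / norm (K *v x1)) *\<^sub>R (K *v x1)"
  have uS: "u \<in> S" unfolding u_def S_def by (simp add: matrix_vector_mult_scaleR[symmetric])
  have un: "norm u = 1" unfolding u_def using x1 by simp
  have "\<exists>v\<in>S \<inter> sphere 0 1. \<forall>z\<in>S \<inter> sphere 0 1. norm (transpose K *v v) ^ 2 \<le> norm (transpose K *v z) ^ 2"
  proof (rule continuous_attains_inf)
    show "compact (S \<inter> sphere 0 1)" using compact_Int_closed[OF compact_sphere clS] by (simp add: Int_commute)
    show "S \<inter> sphere 0 1 \<noteq> {}" using uS un by auto
    have "continuous_on (S \<inter> sphere 0 1) ((*v) (transpose K))" by (rule matrix_vector_mult_linear_continuous_on)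
    then show "continuous_on (S \<inter> sphere 0 1) (\<lambda>v. norm (transpose K *v v) ^ 2)"
      by (intro continuous_intros)
  qed
  then obtain v where vS: "v \<in> S" and v: "norm v = 1"
    and vmin: "\<And>z. z \<in> S \<Longrightarrow> norm z = 1 \<Longrightarrow> norm (transpose K *v v) ^ 2 \<le> norm (transpose K *v z) ^ 2"
    by auto
  define m where "m = norm (transpose K *v v) ^ 2"
  have bnd: "m * norm z ^ 2 \<le> norm (transpose K *v z) ^ 2" if zS: "z \<in> S" for z
  proof (cases "z = 0")
    case True then show ?thesis by simp
  next
    case False
    then have nz: "norm z > 0" by simp
    have "m \<le> norm (transpose K *v ((1 / norm z) *\<^sub>R z)) ^ 2" unfolding m_def using False zS subS
      by (intro vmin) (auto intro: subspace_scale)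
    also have "transpose K *v ((1 / norm z) *\<^sub>R z) = (1 / norm z) *\<^sub>R (transpose K *v z)"
      by (simp only: matrix_vector_mult_scaleR)
    finally have "m \<le> (norm (transpose K *v z) / norm z) ^ 2" by (simp add: divide_inverse mult.commute)
    then show ?thesis using nz by (simp add: power_divide field_simps)
  qed
  define A where "A y = K *v (transpose K *v y)" for y :: "real^'p"
  have linA: "linear A" unfolding A_def
    by (rule linear_compose[of "\<lambda>y. transpose K *v y" "\<lambda>x. K *v x", unfolded o_def]) (rule matrix_vector_mul_linear)+
  have symA: "A z \<bullet> w = z \<bullet> A w" for z w
    unfolding A_def by (metis adj inner_commute)
  have Azz: "A z \<bullet> z = norm (transpose K *v z) ^ 2" for z
    unfolding A_def by (metis adj inner_commute power2_norm_eq_inner)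
  have AS: "A z \<in> S" for z unfolding A_def S_def by simp
  have Av: "A v = m *\<^sub>R v"
    by (rule rayleigh_eig[OF linA symA subS vS AS]) (use bnd in \<open>auto simp: Azz v m_def\<close>)
  obtain x0 where x0: "v = K *v x0" using vS unfolding S_def by auto
  have ktv: "transpose K *v v \<noteq> 0"
  proof
    assume "transpose K *v v = 0"
    then have "v \<bullet> v = 0" using adj[of K v x0] x0 by (simp add: inner_commute)
    then show False using v by simp
  qed
  have mpos: "m > 0" unfolding m_def using ktv by simp
  have "(transpose K ** K) *v (transpose K *v v) = transpose K *v (A v)"
    unfolding W_apply A_def by simp
  also have "\<dots> = m *\<^sub>R (transpose K *v v)" unfolding Av by (simp only: matrix_vector_mult_scaleR)
  finally have "m \<in> eigenvalues (transpose K ** K)"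
    unfolding eigenvalues_def using ktv by blast
  with mpos bnd show ?thesis unfolding S_def by blast
qed

lemma cs3:
  fixes m1 m2 m3 :: "'a::real_inner"
  assumes "p1 \<ge> 0" "p2 \<ge> 0" "p3 \<ge> 0"
  shows "norm (p1 *\<^sub>R m1 + p2 *\<^sub>R m2 + p3 *\<^sub>R m3) ^ 2
         \<le> (p1 + p2 + p3) * (p1 * norm m1 ^ 2 + p2 * norm m2 ^ 2 + p3 * norm m3 ^ 2)"
proof -
  have id: "(p1 + p2 + p3) * (p1 * norm m1 ^ 2 + p2 * norm m2 ^ 2 + p3 * norm m3 ^ 2)
      - norm (p1 *\<^sub>R m1 + p2 *\<^sub>R m2 + p3 *\<^sub>R m3) ^ 2
      = p1 * p2 * norm (m1 - m2) ^ 2 + p1 * p3 * norm (m1 - m3) ^ 2 + p2 * p3 * norm (m2 - m3) ^ 2"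
    by (simp only: power2_norm_eq_inner) (simp add: inner_simps algebra_simps inner_commute power2_eq_square)
  have "0 \<le> p1 * p2 * norm (m1 - m2) ^ 2 + p1 * p3 * norm (m1 - m3) ^ 2 + p2 * p3 * norm (m2 - m3) ^ 2"
    using assms by (intro add_nonneg_nonneg mult_nonneg_nonneg) auto
  then show ?thesis using id by linarith
qed

lemma aux_lin:
  fixes tau gug gu p :: real
  assumes "tau > 0" "tau * gug = tau * gu + (1 - tau) * p"
  shows "- 2 * gu = - 2 * gug + 2 * (1 - tau) / tau * p"
proof -
  have "(1 - tau) / tau * p = gug - gu" using assms by (simp add: field_simps)
  moreover have "2 * (1 - tau) / tau * p = 2 * ((1 - tau) / tau * p)" by simp
  ultimately show ?thesis by linarith
qed

lemma aux_F2:
  fixes k a b c e :: real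
  assumes "k \<ge> 0" "a - b - c \<le> e"
  shows "- ((k + 1) * c) \<le> (k + 1) * e - k * a - a + k * b + b"
proof -
  have "(k + 1) * (a - b - c) \<le> (k + 1) * e" using assms by (intro mult_left_mono) auto
  then show ?thesis by (simp add: algebra_simps)
qed

lemma step_main:
  fixes F :: "'a::real_inner \<Rightarrow> real" and gF :: "'a \<Rightarrow> 'a"
    and Kf :: "'a \<Rightarrow> 'b::real_inner" and Kt :: "'b \<Rightarrow> 'a"
    and x xf xs xg xh x' xf' :: 'a and y ys y' :: 'b
  assumes linKf: "linear Kf" and linKt: "linear Kt"
    and adjK: "\<And>y x. Kt y \<bullet> x = y \<bullet> Kf x"
    and up: "\<And>y. norm (Kt y) ^ 2 \<le> lam1 * norm y ^ 2"
    and st: "\<And>x y. F y \<ge> F x + gF x \<bullet> (y - x) + \<mu> / 2 * norm (y - x) ^ 2"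
    and ds: "\<And>x y. F y \<le> F x + gF x \<bullet> (y - x) + L / 2 * norm (y - x) ^ 2"
    and cc: "\<And>x y. F y - F x - gF x \<bullet> (y - x) \<ge> norm (gF y - gF x) ^ 2 / (2 * L)"
    and par: "0 < tau" "tau \<le> 1" "0 < L" "0 < \<mu>" "0 < lam1" "eta = 1 / (4 * tau * L)"
             "theta = 1 / (eta * lam1)" "alpha = \<mu>"
    and opt: "gF xs + Kt ys = 0"
    and dxg: "xg = tau *\<^sub>R x + (1 - tau) *\<^sub>R xf"
    and dxh: "xh = inverse (1 + eta * alpha) *\<^sub>R (x - eta *\<^sub>R (gF xg - alpha *\<^sub>R xg + Kt y))"
    and dy': "y' = y + theta *\<^sub>R (Kf xh - Kf xs)"
    and dx': "x' = inverse (1 + eta * alpha) *\<^sub>R (x - eta *\<^sub>R (gF xg - alpha *\<^sub>R xg + Kt y'))"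
    and dxf': "xf' = xg + (2 * tau / (2 - tau)) *\<^sub>R (x' - x)"
  defines "D \<equiv> \<lambda>z. F z - F xs - gF xs \<bullet> (z - xs)"
    and "Y \<equiv> \<lambda>w. 1 / theta * norm (w - ys) ^ 2 - eta / (1 + eta * alpha) * norm (Kt (w - ys)) ^ 2"
  shows "(1 / eta + alpha) * norm (x' - xs) ^ 2 + Y y' + (2 - tau) / tau * D xf'
         \<le> 1 / eta * norm (x - xs) ^ 2 + Y y + 2 * (1 - tau) / tau * D xf
            - (1 / (2 * eta) * norm (x' - x) ^ 2 + alpha * norm (x' - xg) ^ 2
               + 1 / (2 * L) * norm (gF xg - gF xs) ^ 2)"
    and "norm (Kt (y' - ys)) ^ 2 \<le> (2 / eta + alpha + 2 * L) *
            (1 / (2 * eta) * norm (x' - x) ^ 2 + alpha * norm (x' - xg) ^ 2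
               + 1 / (2 * L) * norm (gF xg - gF xs) ^ 2)"
proof -
  define c where "c = 1 + eta * alpha"
  have etapos: "eta > 0" using par by simp
  have alphapos: "alpha > 0" using par by simp
  have cpos: "c \<ge> 1" unfolding c_def using etapos alphapos by simp
  define u where "u = x - xs"
  define u' where "u' = x' - xs"
  define ug where "ug = xg - xs"
  define uh where "uh = xh - xs"
  define uf where "uf = xf - xs"
  define a where "a = x' - x"
  define bb where "bb = x' - xg"
  define G where "G = gF xg - gF xs"
  define Dl where "Dl = y' - ys"
  define dl where "dl = y - ys"
  have gs: "gF xs = - Kt ys" using opt by (simp add: eq_neg_iff_add_eq_0)
  have KtD: "Kt y' = Kt Dl - gF xs" unfolding Dl_def gs using linKt by (simp add: linear_diff)
  have Ktd: "Kt y = Kt dl - gF xs" unfolding dl_def gs using linKt by (simp add: linear_diff)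
  (* V1 *)
  have cx': "c *\<^sub>R x' = x - eta *\<^sub>R (gF xg - alpha *\<^sub>R xg + Kt y')"
    unfolding dx' c_def using cpos c_def by simp
  have V1: "c *\<^sub>R u' = u + (eta * alpha) *\<^sub>R ug - eta *\<^sub>R G - eta *\<^sub>R Kt Dl"
  proof -
    have "c *\<^sub>R u' = c *\<^sub>R x' - c *\<^sub>R xs" unfolding u'_def by (simp add: algebra_simps)
    also have "\<dots> = u + (eta * alpha) *\<^sub>R ug - eta *\<^sub>R G - eta *\<^sub>R Kt Dl"
      unfolding cx' by (simp add: KtD u_def ug_def G_def c_def algebra_simps)
    finally show ?thesis .
  qed
  have cxh: "c *\<^sub>R xh = x - eta *\<^sub>R (gF xg - alpha *\<^sub>R xg + Kt y)"
    unfolding dxh c_def using cpos c_def by simp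
  have V2: "c *\<^sub>R uh = u + (eta * alpha) *\<^sub>R ug - eta *\<^sub>R G - eta *\<^sub>R Kt dl"
  proof -
    have "c *\<^sub>R uh = c *\<^sub>R xh - c *\<^sub>R xs" unfolding uh_def by (simp add: algebra_simps)
    also have "\<dots> = u + (eta * alpha) *\<^sub>R ug - eta *\<^sub>R G - eta *\<^sub>R Kt dl"
      unfolding cxh by (simp add: Ktd u_def ug_def G_def c_def algebra_simps)
    finally show ?thesis .
  qed
  have V3: "Dl - dl = theta *\<^sub>R Kf uh"
    unfolding Dl_def dl_def dy' uh_def using linKf by (simp add: linear_diff)
  have thpos: "theta > 0" using par etapos by simp
  have bbeq: "bb = u' - ug" unfolding bb_def u'_def ug_def by simp
  (* S2: a / eta *)
  have Sa: "(1 / eta) *\<^sub>R a = - (alpha *\<^sub>R bb) - G - Kt Dl"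
  proof -
    have "c *\<^sub>R u' - u' = eta *\<^sub>R (alpha *\<^sub>R u')" unfolding c_def by (simp add: algebra_simps)
    have "a = u' - u" unfolding a_def u'_def u_def by simp
    also have "\<dots> = c *\<^sub>R u' - u - (eta * alpha) *\<^sub>R u'" unfolding c_def by (simp add: algebra_simps)
    also have "\<dots> = (eta * alpha) *\<^sub>R ug - eta *\<^sub>R G - eta *\<^sub>R Kt Dl - (eta * alpha) *\<^sub>R u'"
      by (simp add: V1)
    also have "\<dots> = eta *\<^sub>R (- (alpha *\<^sub>R bb) - G - Kt Dl)"
      by (simp add: bbeq algebra_simps)
    finally show ?thesis using etapos by simp
  qed
  (* S1 + S2 + S3 *)
  have S1: "norm u' ^ 2 = norm u ^ 2 + 2 * (a \<bullet> u') - norm a ^ 2"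
    unfolding a_def u'_def u_def
    by (simp only: power2_norm_eq_inner) (simp add: inner_simps algebra_simps inner_commute)
  have S2: "(1 / eta) * (a \<bullet> u') = - alpha * (bb \<bullet> u') - G \<bullet> u' - Kt Dl \<bullet> u'"
  proof -
    have "(1 / eta) * (a \<bullet> u') = ((1 / eta) *\<^sub>R a) \<bullet> u'" by simp
    also have "\<dots> = - alpha * (bb \<bullet> u') - G \<bullet> u' - Kt Dl \<bullet> u'" unfolding Sa by (simp add: inner_simps)
    finally show ?thesis .
  qed
  have S3: "2 * (bb \<bullet> u') = norm u' ^ 2 + norm bb ^ 2 - norm ug ^ 2"
    unfolding bbeq by (simp only: power2_norm_eq_inner) (simp add: inner_simps algebra_simps inner_commute)
  (* S4 *)
  have S4: "norm Dl ^ 2 = norm dl ^ 2 + 2 * theta * (Kf uh \<bullet> Dl) - norm (Dl - dl) ^ 2"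
  proof -
    have "norm Dl ^ 2 = norm dl ^ 2 + 2 * ((Dl - dl) \<bullet> Dl) - norm (Dl - dl) ^ 2"
      by (simp only: power2_norm_eq_inner) (simp add: inner_simps algebra_simps inner_commute)
    then show ?thesis unfolding V3 by simp
  qed
  have S5: "Kf uh \<bullet> Dl = Kt Dl \<bullet> uh" using adjK[of Dl uh] by (simp add: inner_commute)
  have S6: "uh - u' = (eta / c) *\<^sub>R Kt (Dl - dl)"
  proof -
    have "c *\<^sub>R (uh - u') = c *\<^sub>R uh - c *\<^sub>R u'" by (simp add: algebra_simps)
    also have "\<dots> = eta *\<^sub>R Kt Dl - eta *\<^sub>R Kt dl" unfolding V1 V2 by (simp add: algebra_simps)
    also have "\<dots> = eta *\<^sub>R Kt (Dl - dl)" using linKt by (simp add: linear_diff algebra_simps)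
    finally have "c *\<^sub>R (uh - u') = eta *\<^sub>R Kt (Dl - dl)" .
    then have "(1 / c) *\<^sub>R (c *\<^sub>R (uh - u')) = (1 / c) *\<^sub>R (eta *\<^sub>R Kt (Dl - dl))" by simp
    then show ?thesis using cpos by simp
  qed
  have S7: "2 * (Kt Dl \<bullet> Kt (Dl - dl)) = norm (Kt Dl) ^ 2 + norm (Kt (Dl - dl)) ^ 2 - norm (Kt dl) ^ 2"
    using linKt by (simp only: power2_norm_eq_inner linear_diff) (simp add: inner_simps algebra_simps inner_commute)
  have S8: "norm (Kt (Dl - dl)) ^ 2 \<le> lam1 * norm (Dl - dl) ^ 2" by (rule up)
  have thl: "1 / theta = eta * lam1" using par by simp
  have S8': "eta / c * norm (Kt (Dl - dl)) ^ 2 \<le> 1 / theta * norm (Dl - dl) ^ 2"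
  proof -
    have "eta / c * norm (Kt (Dl - dl)) ^ 2 \<le> eta / c * (lam1 * norm (Dl - dl) ^ 2)"
      using S8 etapos cpos by (intro mult_left_mono) auto
    also have "\<dots> \<le> eta * (lam1 * norm (Dl - dl) ^ 2)"
    proof (rule mult_right_mono)
      have "eta * 1 \<le> eta * c" using etapos cpos by (intro mult_left_mono) auto
      then have "eta \<le> eta * c" by simp
      then show "eta / c \<le> eta" using cpos by (simp add: divide_le_eq)
    qed (use par in simp)
    finally show ?thesis unfolding thl by simp
  qed
  (* combine x and y parts *)
  have S1': "1/eta * norm u' ^ 2 = 1/eta * norm u ^ 2 + 2 * (1/eta * (a \<bullet> u')) - 1/eta * norm a ^ 2"
    unfolding S1 by (simp add: algebra_simps)
  have S4': "1/theta * norm Dl ^ 2 = 1/theta * norm dl ^ 2 + 2 * (Kf uh \<bullet> Dl) - 1/theta * norm (Dl - dl) ^ 2"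
    unfolding S4 using thpos by (simp add: field_simps)
  have S67: "2 * (Kt Dl \<bullet> uh) - 2 * (Kt Dl \<bullet> u') = eta / c * norm (Kt Dl) ^ 2 + eta / c * norm (Kt (Dl - dl)) ^ 2 - eta / c * norm (Kt dl) ^ 2"
  proof -
    have "2 * (Kt Dl \<bullet> uh) - 2 * (Kt Dl \<bullet> u') = eta / c * (2 * (Kt Dl \<bullet> Kt (Dl - dl)))"
    proof -
      have "Kt Dl \<bullet> uh - Kt Dl \<bullet> u' = Kt Dl \<bullet> (uh - u')" by (simp add: inner_simps)
      also have "\<dots> = eta / c * (Kt Dl \<bullet> Kt (Dl - dl))" unfolding S6 by (simp add: inner_simps)
      finally show ?thesis by (simp add: algebra_simps)
    qed
    also have "\<dots> = eta / c * norm (Kt Dl) ^ 2 + eta / c * norm (Kt (Dl - dl)) ^ 2 - eta / c * norm (Kt dl) ^ 2"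
      unfolding S7 by (simp add: algebra_simps)
    finally show ?thesis .
  qed
  have S3': "alpha * (2 * (bb \<bullet> u')) = alpha * norm u' ^ 2 + alpha * norm bb ^ 2 - alpha * norm ug ^ 2"
    unfolding S3 by (simp add: algebra_simps)
  have S2': "1/eta * (a \<bullet> u') = - (alpha * (bb \<bullet> u')) - G \<bullet> u' - Kt Dl \<bullet> u'"
    using S2 by simp
  have XY: "1/eta * norm u' ^ 2 + (1/theta * norm Dl ^ 2 - eta / c * norm (Kt Dl) ^ 2)
      \<le> 1/eta * norm u ^ 2 + (1/theta * norm dl ^ 2 - eta / c * norm (Kt dl) ^ 2)
         - 1/eta * norm a ^ 2 - alpha * norm u' ^ 2 - alpha * norm bb ^ 2 + alpha * norm ug ^ 2
         - 2 * (G \<bullet> u')"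
    using S1' S2' S3' S4' S5 S67 S8' by linarith
  (* function part *)
  define g where "g = gF xg"
  define gs' where "gs' = gF xs"
  define s where "s = 2 * tau / (2 - tau)"
  define T where "T = 2 * (1 - tau) / tau"
  have Tnn: "T \<ge> 0" unfolding T_def using par by simp
  have T1: "(2 - tau) / tau = T + 1" unfolding T_def using par by (simp add: field_simps)
  have spos: "s > 0" unfolding s_def using par by simp
  have Dd: "D z - D w = F z - F w - gs' \<bullet> (z - w)" for z w
    unfolding D_def gs'_def by (simp add: inner_simps)
  have Dxs: "D xs = 0" unfolding D_def by simp
  have tg: "F w \<ge> F z + gF z \<bullet> (w - z)" for z w
  proof -
    have "0 \<le> \<mu> / 2 * norm (w - z) ^ 2" using par by simp
    then show ?thesis using st[where x=z and y=w] by linarith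
  qed
  have F1: "G \<bullet> (xf - xg) \<le> D xf - D xg"
    using tg[of xg xf] unfolding Dd G_def gs'_def by (simp add: inner_simps)
  have F2: "D xf' - D xg - G \<bullet> (xf' - xg) \<le> L / 2 * norm (xf' - xg) ^ 2"
    using ds[where x=xg and y=xf'] unfolding Dd G_def gs'_def by (simp add: inner_simps)
  have F3: "G \<bullet> ug \<ge> D xg + \<mu> / 2 * norm ug ^ 2"
    using st[where x=xg and y=xs] Dd[of xs xg] Dxs unfolding G_def ug_def gs'_def
    by (simp add: inner_simps norm_minus_commute)
  have F4: "D xg \<ge> \<mu> / 2 * norm ug ^ 2"
    using st[where x=xs and y=xg] unfolding D_def ug_def by simp
  have F5: "G \<bullet> ug - D xg \<ge> norm G ^ 2 / (2 * L)"
    using cc[where x=xg and y=xs] Dd[of xs xg] Dxs unfolding G_def ug_def gs'_def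
    by (simp add: inner_simps norm_minus_commute)
  have S10: "- 2 * (G \<bullet> ug) + D xg + alpha * norm ug ^ 2 \<le> - (1 / (2 * L) * norm G ^ 2)"
    using F3 F4 F5 par(8) by simp
  have Gu: "G \<bullet> u' = G \<bullet> u + G \<bullet> a" unfolding u'_def u_def a_def by (simp add: inner_simps)
  have vtau: "tau *\<^sub>R ug = tau *\<^sub>R u + (1 - tau) *\<^sub>R (xf - xg)"
    unfolding ug_def u_def dxg by (simp add: algebra_simps)
  have Gtau: "tau * (G \<bullet> ug) = tau * (G \<bullet> u) + (1 - tau) * (G \<bullet> (xf - xg))"
  proof -
    have "G \<bullet> (tau *\<^sub>R ug) = G \<bullet> (tau *\<^sub>R u + (1 - tau) *\<^sub>R (xf - xg))" using vtau by simp
    then show ?thesis by (simp add: inner_simps)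
  qed
  have Gu2: "- 2 * (G \<bullet> u) = - 2 * (G \<bullet> ug) + T * (G \<bullet> (xf - xg))"
    unfolding T_def by (rule aux_lin[OF par(1) Gtau])
  have Gs: "G \<bullet> (xf' - xg) = s * (G \<bullet> a)" unfolding dxf' s_def a_def by (simp add: inner_simps)
  have Ga: "- 2 * (G \<bullet> a) = - ((T + 1) * (G \<bullet> (xf' - xg)))"
  proof -
    have "(T + 1) * s = 2" unfolding T1[symmetric] s_def using par by (simp add: field_simps)
    then show ?thesis unfolding Gs by (metis mult.assoc mult_minus_left)
  qed
  have F1': "T * (G \<bullet> (xf - xg)) \<le> T * D xf - T * D xg"
    using mult_left_mono[OF F1 Tnn] by (simp add: algebra_simps)
  have T1nn: "T + 1 \<ge> 0" using Tnn by simp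
  have F2': "- ((T + 1) * (G \<bullet> (xf' - xg))) \<le> (T + 1) * (L / 2 * norm (xf' - xg) ^ 2) - T * D xf' - D xf' + T * D xg + D xg"
    by (rule aux_F2[OF Tnn F2])
  have nxf: "norm (xf' - xg) ^ 2 = s ^ 2 * norm a ^ 2" unfolding dxf' s_def a_def
    using par by (simp add: power_mult_distrib power_divide)
  have coef: "(T + 1) * (L / 2 * s ^ 2) \<le> 1 / (2 * eta)"
  proof -
    have "(T + 1) * (L / 2 * s ^ 2) = 2 * tau * L / (2 - tau)"
    proof -
      have w: "\<And>w::real. w \<noteq> 0 \<Longrightarrow> w / tau * (L / 2 * (2 * tau / w) ^ 2) = 2 * tau * L / w"
        using par by (simp add: power2_eq_square field_simps)
      have "2 - tau \<noteq> 0" using par by simp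
      from w[OF this] show ?thesis unfolding T1[symmetric] s_def .
    qed
    also have "\<dots> \<le> 2 * tau * L" using par by (simp add: field_simps)
    also have "\<dots> = 1 / (2 * eta)" using par(1,3) unfolding par(6) by (simp add: field_simps)
    finally show ?thesis .
  qed
  have F2'': "(T + 1) * (L / 2 * norm (xf' - xg) ^ 2) \<le> 1 / (2 * eta) * norm a ^ 2"
    unfolding nxf using mult_right_mono[OF coef, of "norm a ^ 2"] by (simp add: algebra_simps)
  have S9: "- 2 * (G \<bullet> u') \<le> - 2 * (G \<bullet> ug) + T * D xf + D xg - T * D xf' - D xf' + 1 / (2 * eta) * norm a ^ 2"
    using Gu Gu2 Ga F1' F2' F2'' by linarith
  have half: "1/eta * norm a ^ 2 = 2 * (1 / (2 * eta) * norm a ^ 2)" by simp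
  have Yy': "Y y' = 1/theta * norm Dl ^ 2 - eta / c * norm (Kt Dl) ^ 2" unfolding Y_def Dl_def c_def by simp
  have Yy: "Y y = 1/theta * norm dl ^ 2 - eta / c * norm (Kt dl) ^ 2" unfolding Y_def dl_def c_def by simp
  have dist1: "(1 / eta + alpha) * norm u' ^ 2 = 1/eta * norm u' ^ 2 + alpha * norm u' ^ 2"
    by (simp add: algebra_simps)
  have dist2: "(2 - tau) / tau * D xf' = T * D xf' + D xf'" unfolding T1 by (simp add: algebra_simps)
  show "(1 / eta + alpha) * norm (x' - xs) ^ 2 + Y y' + (2 - tau) / tau * D xf'
         \<le> 1 / eta * norm (x - xs) ^ 2 + Y y + 2 * (1 - tau) / tau * D xf
            - (1 / (2 * eta) * norm (x' - x) ^ 2 + alpha * norm (x' - xg) ^ 2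
               + 1 / (2 * L) * norm (gF xg - gF xs) ^ 2)"
    using XY S9 S10 half Yy' Yy dist1 dist2
    unfolding u'_def[symmetric] u_def[symmetric] a_def[symmetric] bb_def[symmetric] G_def[symmetric] T_def[symmetric]
    by linarith
  have KtDl: "Kt Dl = - ((2 / eta) *\<^sub>R ((1/2) *\<^sub>R a) + alpha *\<^sub>R bb + (2 * L) *\<^sub>R ((1 / (2 * L)) *\<^sub>R G))"
  proof -
    have "Kt Dl = - (alpha *\<^sub>R bb) - G - (- (alpha *\<^sub>R bb) - G - Kt Dl)" by simp
    then have "Kt Dl = - (alpha *\<^sub>R bb) - G - (1 / eta) *\<^sub>R a" unfolding Sa[symmetric] .
    note this
    also have "- (alpha *\<^sub>R bb) - G - (1 / eta) *\<^sub>R a = - ((1 / eta) *\<^sub>R a + alpha *\<^sub>R bb + G)"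
      by (simp add: algebra_simps)
    finally have "Kt Dl = - ((1 / eta) *\<^sub>R a + alpha *\<^sub>R bb + G)" .
    then show ?thesis using par by simp
  qed
  have "norm (Kt Dl) ^ 2 \<le> (2 / eta + alpha + 2 * L) *
     (2 / eta * norm ((1/2) *\<^sub>R a) ^ 2 + alpha * norm bb ^ 2 + 2 * L * norm ((1 / (2 * L)) *\<^sub>R G) ^ 2)"
    unfolding KtDl norm_minus_cancel using etapos alphapos par by (intro cs3) auto
  also have "2 / eta * norm ((1/2) *\<^sub>R a) ^ 2 + alpha * norm bb ^ 2 + 2 * L * norm ((1 / (2 * L)) *\<^sub>R G) ^ 2
      = 1 / (2 * eta) * norm a ^ 2 + alpha * norm bb ^ 2 + 1 / (2 * L) * norm G ^ 2"
    using par by (simp add: power_mult_distrib power2_eq_square field_simps)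
  finally show "norm (Kt (y' - ys)) ^ 2 \<le> (2 / eta + alpha + 2 * L) *
            (1 / (2 * eta) * norm (x' - x) ^ 2 + alpha * norm (x' - xg) ^ 2
               + 1 / (2 * L) * norm (gF xg - gF xs) ^ 2)"
    unfolding Dl_def a_def bb_def G_def .
qed

lemma step_contract:
  fixes F :: "'a::real_inner \<Rightarrow> real" and gF :: "'a \<Rightarrow> 'a"
    and Kf :: "'a \<Rightarrow> 'b::real_inner" and Kt :: "'b \<Rightarrow> 'a"
    and x xf xs xg xh x' xf' :: 'a and y ys y' :: 'b
  assumes linKf: "linear Kf" and linKt: "linear Kt"
    and adjK: "\<And>y x. Kt y \<bullet> x = y \<bullet> Kf x"
    and up: "\<And>y. norm (Kt y) ^ 2 \<le> lam1 * norm y ^ 2"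
    and st: "\<And>x y. F y \<ge> F x + gF x \<bullet> (y - x) + \<mu> / 2 * norm (y - x) ^ 2"
    and ds: "\<And>x y. F y \<le> F x + gF x \<bullet> (y - x) + L / 2 * norm (y - x) ^ 2"
    and cc: "\<And>x y. F y - F x - gF x \<bullet> (y - x) \<ge> norm (gF y - gF x) ^ 2 / (2 * L)"
    and par: "0 < tau" "tau \<le> 1" "0 < L" "0 < \<mu>" "0 < lam1" "eta = 1 / (4 * tau * L)"
             "theta = 1 / (eta * lam1)" "alpha = \<mu>"
    and opt: "gF xs + Kt ys = 0"
    and dxg: "xg = tau *\<^sub>R x + (1 - tau) *\<^sub>R xf"
    and dxh: "xh = inverse (1 + eta * alpha) *\<^sub>R (x - eta *\<^sub>R (gF xg - alpha *\<^sub>R xg + Kt y))"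
    and dy': "y' = y + theta *\<^sub>R (Kf xh - Kf xs)"
    and dx': "x' = inverse (1 + eta * alpha) *\<^sub>R (x - eta *\<^sub>R (gF xg - alpha *\<^sub>R xg + Kt y'))"
    and dxf': "xf' = xg + (2 * tau / (2 - tau)) *\<^sub>R (x' - x)"
  defines "D \<equiv> \<lambda>z. F z - F xs - gF xs \<bullet> (z - xs)"
    and "Y \<equiv> \<lambda>w. 1 / theta * norm (w - ys) ^ 2 - eta / (1 + eta * alpha) * norm (Kt (w - ys)) ^ 2"
  assumes low: "lam2 * norm (y' - ys) ^ 2 \<le> norm (Kt (y' - ys)) ^ 2" and lam2: "lam2 > 0"
    and P1: "rho \<le> 1 + eta * alpha" and P2: "rho * (2 * (1 - tau)) \<le> 2 - tau"
    and P3: "(rho - 1) * (lam1 / lam2) * (2 + eta * alpha + 1 / (2 * tau)) \<le> 1" and P0: "rho \<ge> 1"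
  shows "rho * (1 / eta * norm (x' - xs) ^ 2 + Y y' + 2 * (1 - tau) / tau * D xf')
         \<le> 1 / eta * norm (x - xs) ^ 2 + Y y + 2 * (1 - tau) / tau * D xf"
proof -
  note M = step_main[OF linKf linKt adjK up st ds cc par opt dxg dxh dy' dx' dxf']
  define N where "N = 1 / (2 * eta) * norm (x' - x) ^ 2 + alpha * norm (x' - xg) ^ 2
               + 1 / (2 * L) * norm (gF xg - gF xs) ^ 2"
  have etapos: "eta > 0" using par by simp
  have Nnn: "N \<ge> 0" unfolding N_def using etapos par by (intro add_nonneg_nonneg mult_nonneg_nonneg) auto
  have M1: "(1 / eta + alpha) * norm (x' - xs) ^ 2 + Y y' + (2 - tau) / tau * D xf'
         \<le> 1 / eta * norm (x - xs) ^ 2 + Y y + 2 * (1 - tau) / tau * D xf - N"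
    unfolding N_def D_def Y_def by (rule M(1))
  have M2: "norm (Kt (y' - ys)) ^ 2 \<le> (2 / eta + alpha + 2 * L) * N" unfolding N_def by (rule M(2))
  have cpos: "1 + eta * alpha \<ge> 1" using etapos par by simp
  have Yub: "Y y' \<le> 1 / theta * norm (y' - ys) ^ 2"
    unfolding Y_def using etapos cpos by simp
  have "1 / theta * norm (y' - ys) ^ 2 = eta * lam1 * norm (y' - ys) ^ 2" using par by simp
  also have "\<dots> \<le> eta * (lam1 / lam2) * norm (Kt (y' - ys)) ^ 2"
  proof -
    have "lam1 * norm (y' - ys) ^ 2 \<le> (lam1 / lam2) * norm (Kt (y' - ys)) ^ 2"
    proof -
      have "lam1 * norm (y' - ys) ^ 2 = (lam1 / lam2) * (lam2 * norm (y' - ys) ^ 2)" using lam2 by simp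
      also have "\<dots> \<le> (lam1 / lam2) * norm (Kt (y' - ys)) ^ 2"
        using low lam2 par by (intro mult_left_mono) auto
      finally show ?thesis .
    qed
    then have "eta * (lam1 * norm (y' - ys) ^ 2) \<le> eta * ((lam1 / lam2) * norm (Kt (y' - ys)) ^ 2)"
      using etapos by (intro mult_left_mono) auto
    then show ?thesis by (simp only: mult.assoc)
  qed
  also have "\<dots> \<le> eta * (lam1 / lam2) * ((2 / eta + alpha + 2 * L) * N)"
    using M2 etapos par lam2 by (intro mult_left_mono) auto
  also have "\<dots> = (lam1 / lam2) * (2 + eta * alpha + 1 / (2 * tau)) * N"
  proof -
    have "eta * (2 / eta + alpha + 2 * L) = 2 + eta * alpha + 1 / (2 * tau)"
      using par etapos unfolding par(6) by (simp add: field_simps)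
    have "eta * (lam1 / lam2) * ((2 / eta + alpha + 2 * L) * N) = (lam1 / lam2) * (eta * (2 / eta + alpha + 2 * L)) * N"
      by (simp only: mult_ac)
    also have "\<dots> = (lam1 / lam2) * (2 + eta * alpha + 1 / (2 * tau)) * N" unfolding \<open>eta * (2 / eta + alpha + 2 * L) = 2 + eta * alpha + 1 / (2 * tau)\<close> ..
    finally show ?thesis .
  qed
  finally have Yb: "Y y' \<le> (lam1 / lam2) * (2 + eta * alpha + 1 / (2 * tau)) * N" using Yub by linarith
  have "(rho - 1) * Y y' \<le> (rho - 1) * ((lam1 / lam2) * (2 + eta * alpha + 1 / (2 * tau)) * N)"
    using Yb P0 by (intro mult_left_mono) auto
  also have "\<dots> \<le> N"
  proof -
    have "(rho - 1) * ((lam1 / lam2) * (2 + eta * alpha + 1 / (2 * tau)) * N) = ((rho - 1) * (lam1 / lam2) * (2 + eta * alpha + 1 / (2 * tau))) * N"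
      by (simp add: mult.assoc)
    also have "\<dots> \<le> 1 * N" using P3 Nnn by (intro mult_right_mono) auto
    finally show ?thesis by simp
  qed
  finally have YN: "(rho - 1) * Y y' \<le> N" .
  have Dnn: "D xf' \<ge> 0"
  proof -
    have "0 \<le> \<mu> / 2 * norm (xf' - xs) ^ 2" using par by simp
    then show ?thesis using st[where x=xs and y=xf'] unfolding D_def by linarith
  qed
  have X1: "rho * (1 / eta * norm (x' - xs) ^ 2) \<le> (1 / eta + alpha) * norm (x' - xs) ^ 2"
  proof -
    have "rho * (1 / eta) \<le> 1 / eta + alpha"
    proof -
      have "rho * (1 / eta) \<le> (1 + eta * alpha) * (1 / eta)" using P1 etapos by (intro mult_right_mono) auto
      also have "\<dots> = 1 / eta + alpha" using etapos by (simp add: field_simps)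
      finally show ?thesis .
    qed
    from mult_right_mono[OF this zero_le_power2[of "norm (x' - xs)"]] show ?thesis by (simp only: mult.assoc)
  qed
  have X2: "rho * (2 * (1 - tau) / tau * D xf') \<le> (2 - tau) / tau * D xf'"
  proof -
    have "rho * (2 * (1 - tau) / tau) \<le> (2 - tau) / tau"
      using P2 par by (simp add: divide_right_mono)
    from mult_right_mono[OF this Dnn] show ?thesis by (simp only: mult.assoc)
  qed
  have "rho * (1 / eta * norm (x' - xs) ^ 2 + Y y' + 2 * (1 - tau) / tau * D xf')
      = rho * (1 / eta * norm (x' - xs) ^ 2) + Y y' + (rho - 1) * Y y' + rho * (2 * (1 - tau) / tau * D xf')"
    by (simp add: algebra_simps)
  then show ?thesis using M1 YN X1 X2 by linarith
qed

lemma params: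
  fixes L \<mu> lam1 lam2 kappa chi tau eta rho :: real
  assumes mu: "0 < \<mu>" "\<mu> \<le> L" and lam: "0 < lam2" "lam2 \<le> lam1"
    and dk: "kappa = L / \<mu>" and dc: "chi = lam1 / lam2"
    and dt: "tau = min 1 (1/2 * sqrt (chi / kappa))"
    and de: "eta = 1 / (4 * tau * L)"
    and dr: "rho = 1 + 1/4 * min (1 / sqrt (kappa * chi)) (1 / chi)"
  shows "0 < tau" "tau \<le> 1" "1 \<le> rho" "rho \<le> 1 + eta * \<mu>"
    "rho * (2 * (1 - tau)) \<le> 2 - tau"
    "(rho - 1) * chi * (2 + eta * \<mu> + 1 / (2 * tau)) \<le> 1"
proof -
  have k1: "kappa \<ge> 1" unfolding dk using mu by simp
  have c1: "chi \<ge> 1" unfolding dc using lam by simp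
  define q where "q = sqrt (chi / kappa)"
  define p where "p = sqrt (kappa * chi)"
  have qpos: "q > 0" unfolding q_def using k1 c1 by simp
  have kc1: "1 * 1 \<le> kappa * chi" using k1 c1 by (intro mult_mono) auto
  have p1: "p \<ge> 1" unfolding p_def using kc1 by simp
  have pq: "p * q = chi" unfolding p_def q_def using k1 c1
    by (simp add: real_sqrt_mult[symmetric])
  have pkq: "p = kappa * q"
  proof -
    have "kappa * chi = kappa ^ 2 * (chi / kappa)" using k1 by (simp add: power2_eq_square)
    then have "p = sqrt (kappa ^ 2) * sqrt (chi / kappa)" unfolding p_def by (simp only: real_sqrt_mult)
    then show ?thesis unfolding q_def using k1 by simp
  qed
  define r where "r = 1/4 * min (1 / p) (1 / chi)"
  have rdef: "rho = 1 + r" unfolding dr r_def p_def ..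
  have r0: "r \<ge> 0" unfolding r_def using p1 c1 by simp
  have rp: "r \<le> 1 / (4 * p)" unfolding r_def by simp
  have rc: "r \<le> 1 / (4 * chi)" unfolding r_def by simp
  have rc1: "r * chi \<le> 1 / 4" using mult_right_mono[OF rc, of chi] c1 by simp
  have tdef: "tau = min 1 (q / 2)" unfolding dt q_def by simp
  have etamu: "eta * \<mu> = 1 / (4 * tau * kappa)" unfolding de dk using mu by simp
  show tpos: "0 < tau" unfolding tdef using qpos by simp
  show "tau \<le> 1" unfolding tdef by simp
  show "1 \<le> rho" unfolding rdef using r0 by simp
  have "rho \<le> 1 + eta * \<mu> \<and> rho * (2 * (1 - tau)) \<le> 2 - tau
        \<and> (rho - 1) * chi * (2 + eta * \<mu> + 1 / (2 * tau)) \<le> 1"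
  proof (cases "q \<ge> 2")
    case True
    then have t1: "tau = 1" unfolding tdef by simp
    have "chi = kappa * q * q" using pq pkq by simp
    also have "\<dots> \<ge> kappa * 2 * 2" using True k1
      by (intro mult_mono) auto
    finally have ck: "chi \<ge> 4 * kappa" by simp
    have em: "eta * \<mu> = 1 / (4 * kappa)" unfolding etamu t1 by simp
    have "r \<le> 1 / (4 * kappa)"
    proof -
      have "1 / (4 * chi) \<le> 1 / (4 * kappa)" using ck k1 by (intro divide_left_mono) auto
      then show ?thesis using rc by linarith
    qed
    then have P1: "rho \<le> 1 + eta * \<mu>" unfolding rdef em by simp
    have em4: "eta * \<mu> \<le> 1 / 4" unfolding em using k1 by simp
    have "(rho - 1) * chi * (2 + eta * \<mu> + 1 / (2 * tau)) = (r * chi) * (5/2 + eta * \<mu>)"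
      unfolding rdef t1 by simp
    also have "\<dots> \<le> (1/4) * (5/2 + 1/4)" using rc1 em4 r0 c1 mu
      by (intro mult_mono) (auto simp: de t1 mult_nonneg_nonneg)
    finally have P3: "(rho - 1) * chi * (2 + eta * \<mu> + 1 / (2 * tau)) \<le> 1" by simp
    show ?thesis using P1 P3 t1 by simp
  next
    case False
    then have t2: "tau = q / 2" unfolding tdef by simp
    have em: "eta * \<mu> = 1 / (2 * p)" unfolding etamu t2 pkq using k1 qpos by (simp add: field_simps)
    have P1: "rho \<le> 1 + eta * \<mu>"
    proof -
      have "1 / (4 * p) \<le> 1 / (2 * p)" using p1 by (intro divide_left_mono) auto
      then show ?thesis unfolding rdef em using rp by linarith
    qed
    have P2: "rho * (2 * (1 - tau)) \<le> 2 - tau"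
    proof -
      have tle: "tau \<le> 1" "0 < tau" using tpos unfolding tdef by auto
      have "r * (2 * (1 - tau)) \<le> r * 2" using r0 tle by (intro mult_left_mono) auto
      also have "\<dots> \<le> 1 / (2 * p)" using rp by simp
      also have "\<dots> \<le> q / 2"
      proof -
        have "1 \<le> p * q" using pq c1 by simp
        then show ?thesis using p1 by (simp add: field_simps)
      qed
      finally have "r * (2 * (1 - tau)) \<le> tau" unfolding t2 .
      then show ?thesis unfolding rdef by (simp add: algebra_simps)
    qed
    have rcq: "r * chi \<le> q / 4"
    proof -
      have "r * chi \<le> 1 / (4 * p) * chi" using rp c1 by (intro mult_right_mono) auto
      also have "\<dots> = q / 4" unfolding pq[symmetric] using p1 by simp
      finally show ?thesis .
    qed
    have "(rho - 1) * chi * (2 + eta * \<mu> + 1 / (2 * tau))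
        = 2 * (r * chi) + (r * chi) * (1 / (2 * p)) + (r * chi) * (1 / q)"
      unfolding rdef em t2 by (simp add: algebra_simps)
    also have "\<dots> \<le> 2 * (1/4) + (1/4) * (1/2) + (q / 4) * (1 / q)"
    proof -
      have a: "(r * chi) * (1 / (2 * p)) \<le> (1/4) * (1/2)"
        using rc1 p1 r0 c1 by (intro mult_mono) (auto simp: field_simps)
      have b: "(r * chi) * (1 / q) \<le> (q / 4) * (1 / q)"
        using rcq qpos by (intro mult_right_mono) auto
      show ?thesis using a b rc1 by linarith
    qed
    also have "\<dots> \<le> 1" using qpos by simp
    finally have P3: "(rho - 1) * chi * (2 + eta * \<mu> + 1 / (2 * tau)) \<le> 1" .
    show ?thesis using P1 P2 P3 by simp
  qed
  then show "rho \<le> 1 + eta * \<mu>" "rho * (2 * (1 - tau)) \<le> 2 - tau"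
    "(rho - 1) * chi * (2 + eta * \<mu> + 1 / (2 * tau)) \<le> 1" by auto
qed

lemma KT_upper:
  fixes K :: "real^'d^'p"
  assumes up: "\<And>x. norm (K *v x) ^ 2 \<le> lam1 * norm x ^ 2" and l0: "lam1 \<ge> 0"
  shows "norm (transpose K *v y) ^ 2 \<le> lam1 * norm y ^ 2"
proof (cases "transpose K *v y = 0")
  case True then show ?thesis using l0 by simp
next
  case False
  define a where "a = norm (transpose K *v y)"
  define B where "B = norm (K *v (transpose K *v y))"
  have apos: "a > 0" unfolding a_def using False by simp
  have "a ^ 2 = (K *v (transpose K *v y)) \<bullet> y"
    unfolding a_def power2_norm_eq_inner by (metis adj inner_commute)
  also have "\<dots> \<le> B * norm y" unfolding B_def by (rule norm_cauchy_schwarz)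
  finally have i1: "a ^ 2 \<le> B * norm y" .
  have i2: "B ^ 2 \<le> lam1 * a ^ 2" unfolding B_def a_def by (rule up)
  have "a ^ 2 * a ^ 2 \<le> (B * norm y) ^ 2"
    using i1 apos by (metis power2_eq_square power_mono zero_le_power2)
  also have "\<dots> = B ^ 2 * norm y ^ 2" by (simp add: power_mult_distrib)
  also have "\<dots> \<le> lam1 * a ^ 2 * norm y ^ 2" using i2 by (intro mult_right_mono) auto
  finally have "a ^ 2 * a ^ 2 \<le> a ^ 2 * (lam1 * norm y ^ 2)" by (simp add: algebra_simps)
  moreover have "a ^ 2 > 0" using apos by simp
  ultimately have "a ^ 2 \<le> lam1 * norm y ^ 2" using mult_le_cancel_left_pos by blast
  then show ?thesis unfolding a_def .
qed

theorem proposition1: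
  fixes F :: "real^'d \<Rightarrow> real" and gradF :: "real^'d \<Rightarrow> real^'d"
    and K :: "real^'d^'p" and b :: "real^'p"
    and L \<mu> lam1 lam2 :: real
    and xs x0 :: "real^'d" and ys :: "real^'p"
  assumes grad: "\<And>x. (F has_derivative (\<lambda>h. gradF x \<bullet> h)) (at x)"
    and mu_pos: "0 < \<mu>" and mu_le_L: "\<mu> \<le> L"
    and smooth: "\<And>x y. norm (gradF x - gradF y) \<le> L * norm (x - y)"
    and strongly_convex: "convex_on UNIV (\<lambda>x. F x - \<mu> / 2 * norm x ^ 2)"
    and K_nz: "K \<noteq> 0"
    and b_range: "b \<in> range (\<lambda>x. K *v x)"
    and xs_feas: "K *v xs = b"
    and xs_min: "\<And>x. K *v x = b \<Longrightarrow> F xs \<le> F x"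
    and ys_range: "ys \<in> range (\<lambda>x. K *v x)"
    and ys_opt: "gradF xs + transpose K *v ys = 0"
    and lam1_bd: "\<forall>l \<in> eigenvalues (transpose K ** K). l \<le> lam1"
    and lam2_pos: "0 < lam2"
    and lam2_bd: "\<forall>l \<in> eigenvalues (transpose K ** K). 0 < l \<longrightarrow> lam2 \<le> l"
  shows "let kappa = L / \<mu>; chi = lam1 / lam2;
             tau = min 1 (1/2 * sqrt (chi / kappa));
             eta = 1 / (4 * tau * L);
             theta = 1 / (eta * lam1);
             alpha = \<mu>;
             C = 1/eta * norm (x0 - xs)^2 + 1/theta * norm (0 - ys)^2
                 + 2 * (1 - tau) / tau * bregman F gradF x0 xs
         in \<forall>k. (case algB gradF K b eta theta alpha tau x0 k of (x, y, xf) \<Rightarrow>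
                  1/eta * norm (x - xs)^2
                  + eta * alpha / (theta * (1 + eta * alpha)) * norm (y - ys)^2
                  + 2 * (1 - tau) / tau * bregman F gradF xf xs
                \<le> inverse (1 + 1/4 * min (1 / sqrt (kappa * chi)) (1 / chi)) ^ k * C)"
proof -
  define kappa where "kappa = L / \<mu>"
  define chi where "chi = lam1 / lam2"
  define tau where "tau = min 1 (1/2 * sqrt (chi / kappa))"
  define eta where "eta = 1 / (4 * tau * L)"
  define theta where "theta = 1 / (eta * lam1)"
  define alpha where "alpha = \<mu>"
  define C where "C = 1/eta * norm (x0 - xs)^2 + 1/theta * norm (0 - ys)^2
                 + 2 * (1 - tau) / tau * bregman F gradF x0 xs"
  define rho where "rho = 1 + 1/4 * min (1 / sqrt (kappa * chi)) (1 / chi)"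
  have Lpos: "L > 0" using mu_pos mu_le_L by simp
  (* spectral facts *)
  obtain m where mev: "m \<in> eigenvalues (transpose K ** K)" and mb: "\<And>x. norm (K *v x) ^ 2 \<le> m * norm x ^ 2"
    and mpos: "m > 0"
    using upper_spec[OF lam1_bd] K_nz by blast
  have ml1: "m \<le> lam1" using lam1_bd mev by blast
  have l2m: "lam2 \<le> m" using lam2_bd mev mpos by blast
  have lam1pos: "lam1 > 0" using mpos ml1 by simp
  have lam21: "lam2 \<le> lam1" using ml1 l2m by simp
  have upK: "norm (K *v x) ^ 2 \<le> lam1 * norm x ^ 2" for x
  proof -
    have "m * norm x ^ 2 \<le> lam1 * norm x ^ 2" using ml1 by (intro mult_right_mono) auto
    then show ?thesis using mb[of x] by linarith
  qed
  have upKT: "norm (transpose K *v y) ^ 2 \<le> lam1 * norm y ^ 2" for y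
    by (rule KT_upper[OF upK]) (use lam1pos in simp)
  obtain m2 where m2ev: "m2 \<in> eigenvalues (transpose K ** K)" and m2pos: "m2 > 0"
    and m2b: "\<And>y. y \<in> range (\<lambda>x. K *v x) \<Longrightarrow> m2 * norm y ^ 2 \<le> norm (transpose K *v y) ^ 2"
    using lower_spec[OF K_nz] by blast
  have l2m2: "lam2 \<le> m2" using lam2_bd m2ev m2pos by blast
  have lowKT: "lam2 * norm y ^ 2 \<le> norm (transpose K *v y) ^ 2" if "y \<in> range (\<lambda>x. K *v x)" for y
  proof -
    have "lam2 * norm y ^ 2 \<le> m2 * norm y ^ 2" using l2m2 by (intro mult_right_mono) auto
    then show ?thesis using m2b[OF that] by linarith
  qed
  (* convexity facts *)
  have st: "\<And>x y. F y \<ge> F x + gradF x \<bullet> (y - x) + \<mu> / 2 * norm (y - x) ^ 2"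
    by (rule strong_tangent[OF grad strongly_convex])
  have ds: "\<And>x y. F y \<le> F x + gradF x \<bullet> (y - x) + L / 2 * norm (y - x) ^ 2"
    by (rule descent[OF grad smooth])
  have tg: "F y \<ge> F x + gradF x \<bullet> (y - x)" for x y
  proof -
    have "0 \<le> \<mu> / 2 * norm (y - x) ^ 2" using mu_pos by simp
    then show ?thesis using st[of x y] by linarith
  qed
  have cc: "\<And>x y. F y - F x - gradF x \<bullet> (y - x) \<ge> norm (gradF y - gradF x) ^ 2 / (2 * L)"
    by (rule cocoercive[OF grad smooth Lpos tg])
  (* parameters *)
  note P = params[OF mu_pos mu_le_L lam2_pos lam21 kappa_def chi_def tau_def eta_def rho_def]
  have etapos: "eta > 0" unfolding eta_def using P(1) Lpos by simp
  have thpos: "theta > 0" unfolding theta_def using etapos lam1pos by simp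
  have rhopos: "rho > 0" using P(3) by simp
  define Psi where "Psi s = (case s of (x, y, xf) \<Rightarrow> 1 / eta * norm (x - xs) ^ 2
      + (1 / theta * norm (y - ys) ^ 2 - eta / (1 + eta * alpha) * norm (transpose K *v (y - ys)) ^ 2)
      + 2 * (1 - tau) / tau * bregman F gradF xf xs)" for s
  define A where "A k = algB gradF K b eta theta alpha tau x0 k" for k
  have A0: "A 0 = (x0, 0, x0)" unfolding A_def algB_def by simp
  have AS: "A (Suc k) = algB_step gradF K b eta theta alpha tau (A k)" for k
    unfolding A_def algB_def by simp
  have inv: "fst (snd (A k)) - ys \<in> range (\<lambda>x. K *v x) \<and> Psi (A k) \<le> inverse rho ^ k * Psi (A 0)" for k
  proof (induction k)
    case 0
    obtain z where z: "ys = K *v z" using ys_range by auto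
    have "fst (snd (A 0)) - ys = K *v (0 - z)" unfolding A0 z by (simp only: matrix_vector_mult_diff_distrib) simp
    then show ?case by auto
  next
    case (Suc k)
    obtain x y xf where Ak: "A k = (x, y, xf)" by (cases "A k") auto
    define xg where "xg = tau *\<^sub>R x + (1 - tau) *\<^sub>R xf"
    define xh where "xh = inverse (1 + eta * alpha) *\<^sub>R (x - eta *\<^sub>R (gradF xg - alpha *\<^sub>R xg + transpose K *v y))"
    define y' where "y' = y + theta *\<^sub>R (K *v xh - b)"
    define x' where "x' = inverse (1 + eta * alpha) *\<^sub>R (x - eta *\<^sub>R (gradF xg - alpha *\<^sub>R xg + transpose K *v y'))"
    define xf' where "xf' = xg + (2 * tau / (2 - tau)) *\<^sub>R (x' - x)"
    have ASk: "A (Suc k) = (x', y', xf')"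
      unfolding AS Ak algB_step_def Let_def xg_def xh_def y'_def x'_def xf'_def by simp
    have yR: "y - ys \<in> range (\<lambda>x. K *v x)" using Suc.IH Ak by simp
    have y'R: "y' - ys \<in> range (\<lambda>x. K *v x)"
    proof -
      obtain z where z: "y - ys = K *v z" using yR by auto
      have "y' - ys = K *v (z + theta *\<^sub>R (xh - xs))"
        unfolding y'_def xs_feas[symmetric]
        by (simp add: z[symmetric] matrix_vector_right_distrib matrix_vector_mult_diff_distrib
              matrix_vector_mult_scaleR algebra_simps)
      then show ?thesis by auto
    qed
    have dy': "y' = y + theta *\<^sub>R (K *v xh - K *v xs)" unfolding y'_def xs_feas ..
    have step: "rho * (1 / eta * norm (x' - xs) ^ 2 + (1 / theta * norm (y' - ys) ^ 2 - eta / (1 + eta * alpha) * norm (transpose K *v (y' - ys)) ^ 2) + 2 * (1 - tau) / tau * bregman F gradF xf' xs)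
         \<le> 1 / eta * norm (x - xs) ^ 2 + (1 / theta * norm (y - ys) ^ 2 - eta / (1 + eta * alpha) * norm (transpose K *v (y - ys)) ^ 2) + 2 * (1 - tau) / tau * bregman F gradF xf xs"
      unfolding bregman_def
      by (rule step_contract[where Kf="\<lambda>x. K *v x" and Kt="\<lambda>y. transpose K *v y" and F=F and gF=gradF, OF matrix_vector_mul_linear matrix_vector_mul_linear
            adj upKT st ds cc P(1,2) Lpos mu_pos lam1pos eta_def theta_def alpha_def ys_opt xg_def xh_def dy' x'_def xf'_def
            lowKT[OF y'R] lam2_pos P(4)[folded alpha_def] P(5) P(6)[folded alpha_def, unfolded chi_def] P(3)])
    have "Psi (A (Suc k)) \<le> inverse rho * Psi (A k)"
    proof -
      have "rho * Psi (A (Suc k)) \<le> Psi (A k)" using step unfolding ASk Ak Psi_def by simp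
      then show ?thesis using rhopos by (simp add: field_simps)
    qed
    also have "\<dots> \<le> inverse rho * (inverse rho ^ k * Psi (A 0))"
      using Suc.IH rhopos by (intro mult_left_mono) auto
    finally show ?case using y'R ASk by simp
  qed
  have P0C: "Psi (A 0) \<le> C"
  proof -
    have "0 \<le> eta / (1 + eta * alpha) * norm (transpose K *v (0 - ys)) ^ 2"
      using etapos mu_pos unfolding alpha_def by simp
    then show ?thesis unfolding A0 Psi_def C_def by simp
  qed
  have main: "(case A k of (x, y, xf) \<Rightarrow>
                  1/eta * norm (x - xs)^2
                  + eta * alpha / (theta * (1 + eta * alpha)) * norm (y - ys)^2
                  + 2 * (1 - tau) / tau * bregman F gradF xf xs
                \<le> inverse rho ^ k * C)" for k
  proof -
    obtain x y xf where Ak: "A k = (x, y, xf)" by (cases "A k") auto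
    define c where "c = 1 + eta * alpha"
    have cpos: "c > 0" unfolding c_def alpha_def using etapos mu_pos by (simp add: add_pos_pos)
    have "eta / c * norm (transpose K *v (y - ys)) ^ 2 \<le> eta / c * (lam1 * norm (y - ys) ^ 2)"
      using upKT etapos cpos by (intro mult_left_mono) auto
    also have "\<dots> = 1 / theta * norm (y - ys) ^ 2 - eta * alpha / (theta * c) * norm (y - ys) ^ 2"
      unfolding theta_def using etapos lam1pos cpos unfolding c_def by (simp add: field_simps)
    finally have Yl: "eta * alpha / (theta * c) * norm (y - ys) ^ 2
        \<le> 1 / theta * norm (y - ys) ^ 2 - eta / c * norm (transpose K *v (y - ys)) ^ 2" by linarith
    have "1/eta * norm (x - xs)^2 + eta * alpha / (theta * c) * norm (y - ys)^2
          + 2 * (1 - tau) / tau * bregman F gradF xf xs \<le> Psi (A k)"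
      unfolding Ak Psi_def c_def[symmetric] using Yl by simp
    also have "\<dots> \<le> inverse rho ^ k * Psi (A 0)" using inv[of k] by simp
    also have "\<dots> \<le> inverse rho ^ k * C" using P0C rhopos by (intro mult_left_mono) auto
    finally show ?thesis unfolding Ak c_def by simp
  qed
  show ?thesis unfolding Let_def
    using main unfolding A_def rho_def C_def kappa_def chi_def tau_def eta_def theta_def alpha_def
    by blast
qed

end
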